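(* Let $R_1,R_2$ be commutative rings with nonzero identity, $I_1$ an ideal of $R_1$, $I_2$ an ideal of $R_2$, $R=R_1\times R_2$ and $I=I_1\times I_2$. Then (a) $\omega(\Gamma''_I(R))\geq\max\{\omega(\Gamma''_{I_1}(R_1)),\omega(\Gamma''_{I_2}(R_2))\}$; (b) $\chi(\Gamma''_I(R))\geq\max\{\chi(\Gamma''_{I_1}(R_1)),\chi(\Gamma''_{I_2}(R_2))\}$.
   Context: $R_1\times R_2$ has componentwise operations. For a commutative ring $S$ and an ideal $J$ of $S$, $\Gamma''_J(S)$ is the simple undirected graph whose vertex set is $\{x\in S\setminus J : xS+J\neq S\}$, with distinct vertices $x,y$ adjacent if and only if $x\notin yS+J$ and $y\notin xS+J$. $\omega(G)$ is the clique number of $G$ (the number of vertices in a largest complete subgraph) and $\chi(G)$ is the chromatic number of $G$ (the minimal number of colors in a coloring of the vertices in which adjacent vertices get different colors). *)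

theory Defs
  imports "HOL-Algebra.Chinese_Remainder" "HOL-Library.Extended_Nat"
begin

definition gen_plus :: "('a, 'm) ring_scheme \<Rightarrow> 'a \<Rightarrow> 'a set \<Rightarrow> 'a set" where
  "gen_plus S x J = {x \<otimes>\<^bsub>S\<^esub> s \<oplus>\<^bsub>S\<^esub> j | s j. s \<in> carrier S \<and> j \<in> J}"

definition gvert :: "('a, 'm) ring_scheme \<Rightarrow> 'a set \<Rightarrow> 'a set" where
  "gvert S J = {x \<in> carrier S - J. gen_plus S x J \<noteq> carrier S}"

definition gadj :: "('a, 'm) ring_scheme \<Rightarrow> 'a set \<Rightarrow> 'a \<Rightarrow> 'a \<Rightarrow> bool" where
  "gadj S J x y \<longleftrightarrow> x \<in> gvert S J \<and> y \<in> gvert S J \<and> x \<noteq> y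
      \<and> x \<notin> gen_plus S y J \<and> y \<notin> gen_plus S x J"

text \<open>Simple graphs given by a vertex set V and a symmetric irreflexive adjacency E.
  Clique number: supremum of the sizes of finite cliques (\<infinity> if unbounded).\<close>
definition clique_number :: "'a set \<Rightarrow> ('a \<Rightarrow> 'a \<Rightarrow> bool) \<Rightarrow> enat" where
  "clique_number V E = Sup {enat (card C) | C. C \<subseteq> V \<and> finite C \<and>
      (\<forall>x\<in>C. \<forall>y\<in>C. x \<noteq> y \<longrightarrow> E x y)}"

definition chromatic_number :: "'a set \<Rightarrow> ('a \<Rightarrow> 'a \<Rightarrow> bool) \<Rightarrow> enat" where
  "chromatic_number V E = Inf {enat (card (f ` V)) | f :: 'a \<Rightarrow> nat. finite (f ` V) \<and>
      (\<forall>x\<in>V. \<forall>y\<in>V. E x y \<longrightarrow> f x \<noteq> f y)}"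

abbreviation omega_G :: "('a, 'm) ring_scheme \<Rightarrow> 'a set \<Rightarrow> enat" where
  "omega_G S J \<equiv> clique_number (gvert S J) (gadj S J)"

abbreviation chi_G :: "('a, 'm) ring_scheme \<Rightarrow> 'a set \<Rightarrow> enat" where
  "chi_G S J \<equiv> chromatic_number (gvert S J) (gadj S J)"

end

theory Submission
  imports Defs
begin

lemma RDP_mult: "(a,b) \<otimes>\<^bsub>RDirProd R S\<^esub> (c,d) = (a \<otimes>\<^bsub>R\<^esub> c, b \<otimes>\<^bsub>S\<^esub> d)"
  by (simp add: RDirProd_def DirProd_def monoid.defs)

lemma RDP_add: "(a,b) \<oplus>\<^bsub>RDirProd R S\<^esub> (c,d) = (a \<oplus>\<^bsub>R\<^esub> c, b \<oplus>\<^bsub>S\<^esub> d)"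
  by (simp add: RDirProd_def DirProd_def monoid.defs)

lemma gp1:
  assumes "cring R1" "cring R2" "ideal I1 R1" "ideal I2 R2" "x \<in> carrier R1"
  shows "gen_plus (RDirProd R1 R2) (x, \<zero>\<^bsub>R2\<^esub>) (I1 \<times> I2) = gen_plus R1 x I1 \<times> I2"
proof -
  interpret A: cring R1 by fact
  interpret B: cring R2 by fact
  have I2c: "I2 \<subseteq> carrier R2" using assms(4) ideal.axioms(1) additive_subgroup.a_subset by blast
  show ?thesis
  proof (intro equalityI subsetI)
    fix z assume "z \<in> gen_plus (RDirProd R1 R2) (x, \<zero>\<^bsub>R2\<^esub>) (I1 \<times> I2)"
    then obtain s t j1 j2 where "s \<in> carrier R1" "t \<in> carrier R2" "j1 \<in> I1" "j2 \<in> I2"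
      "z = (x \<otimes>\<^bsub>R1\<^esub> s \<oplus>\<^bsub>R1\<^esub> j1, \<zero>\<^bsub>R2\<^esub> \<otimes>\<^bsub>R2\<^esub> t \<oplus>\<^bsub>R2\<^esub> j2)"
      unfolding gen_plus_def by (auto simp: RDirProd_carrier RDP_mult RDP_add)
    moreover have "j2 \<in> carrier R2" using I2c \<open>j2 \<in> I2\<close> by auto
    ultimately show "z \<in> gen_plus R1 x I1 \<times> I2" unfolding gen_plus_def by auto
  next
    fix z assume "z \<in> gen_plus R1 x I1 \<times> I2"
    then obtain s j1 j2 where "s \<in> carrier R1" "j1 \<in> I1" "j2 \<in> I2"
      "z = (x \<otimes>\<^bsub>R1\<^esub> s \<oplus>\<^bsub>R1\<^esub> j1, j2)"
      unfolding gen_plus_def by auto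
    moreover have "j2 \<in> carrier R2" using I2c \<open>j2 \<in> I2\<close> by auto
    ultimately have "z = (x, \<zero>\<^bsub>R2\<^esub>) \<otimes>\<^bsub>RDirProd R1 R2\<^esub> (s, \<zero>\<^bsub>R2\<^esub>) \<oplus>\<^bsub>RDirProd R1 R2\<^esub> (j1, j2)"
      by (simp add: RDP_mult RDP_add)
    moreover have "\<zero>\<^bsub>R1\<^esub> \<in> carrier R1" "\<zero>\<^bsub>R2\<^esub> \<in> carrier R2" by simp_all
    ultimately show "z \<in> gen_plus (RDirProd R1 R2) (x, \<zero>\<^bsub>R2\<^esub>) (I1 \<times> I2)"
      unfolding gen_plus_def using \<open>s \<in> carrier R1\<close> \<open>j1 \<in> I1\<close> \<open>j2 \<in> I2\<close>
      by (simp add: RDirProd_carrier) blast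
  qed
qed

lemma emb1:
  assumes "cring R1" "cring R2" "ideal I1 R1" "ideal I2 R2"
  shows "\<forall>x\<in>gvert R1 I1. (x, \<zero>\<^bsub>R2\<^esub>) \<in> gvert (RDirProd R1 R2) (I1 \<times> I2)"
    and "\<forall>x\<in>gvert R1 I1. \<forall>y\<in>gvert R1 I1. gadj R1 I1 x y \<longrightarrow>
           gadj (RDirProd R1 R2) (I1 \<times> I2) (x, \<zero>\<^bsub>R2\<^esub>) (y, \<zero>\<^bsub>R2\<^esub>)"
proof -
  interpret B: cring R2 by fact
  have z: "\<zero>\<^bsub>R2\<^esub> \<in> carrier R2" by simp
  have zi: "\<zero>\<^bsub>R2\<^esub> \<in> I2" using assms(4) additive_subgroup.zero_closed ideal.axioms(1) by blast
  show V: "\<forall>x\<in>gvert R1 I1. (x, \<zero>\<^bsub>R2\<^esub>) \<in> gvert (RDirProd R1 R2) (I1 \<times> I2)"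
  proof
    fix x assume x: "x \<in> gvert R1 I1"
    hence xc: "x \<in> carrier R1" "x \<notin> I1" "gen_plus R1 x I1 \<noteq> carrier R1" by (auto simp: gvert_def)
    have "gen_plus R1 x I1 \<times> I2 \<noteq> carrier R1 \<times> carrier R2"
    proof
      assume "gen_plus R1 x I1 \<times> I2 = carrier R1 \<times> carrier R2"
      hence "gen_plus R1 x I1 = carrier R1" using z zi by (metis fst_image_times equals0D)
      with xc show False by simp
    qed
    then show "(x, \<zero>\<^bsub>R2\<^esub>) \<in> gvert (RDirProd R1 R2) (I1 \<times> I2)"
      using xc z gp1[OF assms xc(1)] by (auto simp: gvert_def RDirProd_carrier)
  qed
  show "\<forall>x\<in>gvert R1 I1. \<forall>y\<in>gvert R1 I1. gadj R1 I1 x y \<longrightarrow>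
           gadj (RDirProd R1 R2) (I1 \<times> I2) (x, \<zero>\<^bsub>R2\<^esub>) (y, \<zero>\<^bsub>R2\<^esub>)"
  proof (intro ballI impI)
    fix x y assume x: "x \<in> gvert R1 I1" and y: "y \<in> gvert R1 I1" and a: "gadj R1 I1 x y"
    have xc: "x \<in> carrier R1" "y \<in> carrier R1" using x y by (auto simp: gvert_def)
    show "gadj (RDirProd R1 R2) (I1 \<times> I2) (x, \<zero>\<^bsub>R2\<^esub>) (y, \<zero>\<^bsub>R2\<^esub>)"
      using a V x y gp1[OF assms xc(1)] gp1[OF assms xc(2)] unfolding gadj_def by auto
  qed
qed

lemma gp2:
  assumes "cring R1" "cring R2" "ideal I1 R1" "ideal I2 R2" "x \<in> carrier R2"
  shows "gen_plus (RDirProd R1 R2) (\<zero>\<^bsub>R1\<^esub>, x) (I1 \<times> I2) = I1 \<times> gen_plus R2 x I2"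
proof -
  interpret A: cring R1 by fact
  interpret B: cring R2 by fact
  have I1c: "I1 \<subseteq> carrier R1" using assms(3) ideal.axioms(1) additive_subgroup.a_subset by blast
  show ?thesis
  proof (intro equalityI subsetI)
    fix z assume "z \<in> gen_plus (RDirProd R1 R2) (\<zero>\<^bsub>R1\<^esub>, x) (I1 \<times> I2)"
    then obtain s t j1 j2 where "s \<in> carrier R1" "t \<in> carrier R2" "j1 \<in> I1" "j2 \<in> I2"
      "z = (\<zero>\<^bsub>R1\<^esub> \<otimes>\<^bsub>R1\<^esub> s \<oplus>\<^bsub>R1\<^esub> j1, x \<otimes>\<^bsub>R2\<^esub> t \<oplus>\<^bsub>R2\<^esub> j2)"
      unfolding gen_plus_def by (auto simp: RDirProd_carrier RDP_mult RDP_add)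
    moreover have "j1 \<in> carrier R1" using I1c \<open>j1 \<in> I1\<close> by auto
    ultimately show "z \<in> I1 \<times> gen_plus R2 x I2" unfolding gen_plus_def by auto
  next
    fix z assume "z \<in> I1 \<times> gen_plus R2 x I2"
    then obtain s j1 j2 where "s \<in> carrier R2" "j1 \<in> I1" "j2 \<in> I2"
      "z = (j1, x \<otimes>\<^bsub>R2\<^esub> s \<oplus>\<^bsub>R2\<^esub> j2)"
      unfolding gen_plus_def by auto
    moreover have "j1 \<in> carrier R1" using I1c \<open>j1 \<in> I1\<close> by auto
    ultimately have "z = (\<zero>\<^bsub>R1\<^esub>, x) \<otimes>\<^bsub>RDirProd R1 R2\<^esub> (\<zero>\<^bsub>R1\<^esub>, s) \<oplus>\<^bsub>RDirProd R1 R2\<^esub> (j1, j2)"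
      by (simp add: RDP_mult RDP_add)
    moreover have "\<zero>\<^bsub>R1\<^esub> \<in> carrier R1" "\<zero>\<^bsub>R2\<^esub> \<in> carrier R2" by simp_all
    ultimately show "z \<in> gen_plus (RDirProd R1 R2) (\<zero>\<^bsub>R1\<^esub>, x) (I1 \<times> I2)"
      unfolding gen_plus_def using \<open>s \<in> carrier R2\<close> \<open>j1 \<in> I1\<close> \<open>j2 \<in> I2\<close>
      by (simp add: RDirProd_carrier) blast
  qed
qed

lemma emb2:
  assumes "cring R1" "cring R2" "ideal I1 R1" "ideal I2 R2"
  shows "\<forall>x\<in>gvert R2 I2. (\<zero>\<^bsub>R1\<^esub>, x) \<in> gvert (RDirProd R1 R2) (I1 \<times> I2)"
    and "\<forall>x\<in>gvert R2 I2. \<forall>y\<in>gvert R2 I2. gadj R2 I2 x y \<longrightarrow>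
           gadj (RDirProd R1 R2) (I1 \<times> I2) (\<zero>\<^bsub>R1\<^esub>, x) (\<zero>\<^bsub>R1\<^esub>, y)"
proof -
  interpret A: cring R1 by fact
  have z: "\<zero>\<^bsub>R1\<^esub> \<in> carrier R1" by simp
  have zi: "\<zero>\<^bsub>R1\<^esub> \<in> I1" using assms(3) additive_subgroup.zero_closed ideal.axioms(1) by blast
  show V: "\<forall>x\<in>gvert R2 I2. (\<zero>\<^bsub>R1\<^esub>, x) \<in> gvert (RDirProd R1 R2) (I1 \<times> I2)"
  proof
    fix x assume x: "x \<in> gvert R2 I2"
    hence xc: "x \<in> carrier R2" "x \<notin> I2" "gen_plus R2 x I2 \<noteq> carrier R2" by (auto simp: gvert_def)
    have "I1 \<times> gen_plus R2 x I2 \<noteq> carrier R1 \<times> carrier R2"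
    proof
      assume "I1 \<times> gen_plus R2 x I2 = carrier R1 \<times> carrier R2"
      hence "gen_plus R2 x I2 = carrier R2" using z zi by (metis snd_image_times equals0D)
      with xc show False by simp
    qed
    then show "(\<zero>\<^bsub>R1\<^esub>, x) \<in> gvert (RDirProd R1 R2) (I1 \<times> I2)"
      using xc z gp2[OF assms xc(1)] by (auto simp: gvert_def RDirProd_carrier)
  qed
  show "\<forall>x\<in>gvert R2 I2. \<forall>y\<in>gvert R2 I2. gadj R2 I2 x y \<longrightarrow>
           gadj (RDirProd R1 R2) (I1 \<times> I2) (\<zero>\<^bsub>R1\<^esub>, x) (\<zero>\<^bsub>R1\<^esub>, y)"
  proof (intro ballI impI)
    fix x y assume x: "x \<in> gvert R2 I2" and y: "y \<in> gvert R2 I2" and a: "gadj R2 I2 x y"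
    have xc: "x \<in> carrier R2" "y \<in> carrier R2" using x y by (auto simp: gvert_def)
    show "gadj (RDirProd R1 R2) (I1 \<times> I2) (\<zero>\<^bsub>R1\<^esub>, x) (\<zero>\<^bsub>R1\<^esub>, y)"
      using a V x y gp2[OF assms xc(1)] gp2[OF assms xc(2)] unfolding gadj_def by auto
  qed
qed

lemma clique_mono:
  assumes "\<forall>x\<in>V. \<phi> x \<in> W" "inj_on \<phi> V" "\<forall>x\<in>V. \<forall>y\<in>V. E x y \<longrightarrow> F (\<phi> x) (\<phi> y)"
  shows "clique_number V E \<le> clique_number W F"
  unfolding clique_number_def
proof (rule Sup_subset_mono, safe)
  fix C assume C: "C \<subseteq> V" "finite C" "\<forall>x\<in>C. \<forall>y\<in>C. x \<noteq> y \<longrightarrow> E x y"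
  have "card (\<phi> ` C) = card C" using C(1) assms(2) by (meson card_image inj_on_subset)
  moreover have "\<phi> ` C \<subseteq> W" "finite (\<phi> ` C)" using C assms(1) by auto
  moreover have "\<forall>x\<in>\<phi> ` C. \<forall>y\<in>\<phi> ` C. x \<noteq> y \<longrightarrow> F x y"
  proof (intro ballI impI)
    fix a b assume "a \<in> \<phi> ` C" "b \<in> \<phi> ` C" "a \<noteq> b"
    then obtain u v where "u \<in> C" "v \<in> C" "a = \<phi> u" "b = \<phi> v" by blast
    moreover have "u \<noteq> v" using \<open>a \<noteq> b\<close> calculation by blast
    ultimately show "F a b" using C assms(3) by blast
  qed
  ultimately show "\<exists>D. enat (card C) = enat (card D) \<and> D \<subseteq> W \<and> finite D \<and>
      (\<forall>x\<in>D. \<forall>y\<in>D. x \<noteq> y \<longrightarrow> F x y)" by metis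
qed

lemma chrom_mono:
  assumes "\<forall>x\<in>V. \<phi> x \<in> W" "\<forall>x\<in>V. \<forall>y\<in>V. E x y \<longrightarrow> F (\<phi> x) (\<phi> y)"
  shows "chromatic_number V E \<le> chromatic_number W F"
  unfolding chromatic_number_def
proof (rule Inf_mono, safe)
  fix f :: "'b \<Rightarrow> nat" assume f: "finite (f ` W)" "\<forall>x\<in>W. \<forall>y\<in>W. F x y \<longrightarrow> f x \<noteq> f y"
  have sub: "(f \<circ> \<phi>) ` V \<subseteq> f ` W" using assms(1) by auto
  hence fin: "finite ((f \<circ> \<phi>) ` V)" using f(1) finite_subset by blast
  have "card ((f \<circ> \<phi>) ` V) \<le> card (f ` W)" using sub f(1) card_mono by blast
  have col: "\<forall>x\<in>V. \<forall>y\<in>V. E x y \<longrightarrow> (f \<circ> \<phi>) x \<noteq> (f \<circ> \<phi>) y" using assms f(2) by auto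
  have m: "enat (card ((f \<circ> \<phi>) ` V)) \<in> {enat (card (g ` V)) |(g :: _ \<Rightarrow> nat). finite (g ` V) \<and> (\<forall>x\<in>V. \<forall>y\<in>V. E x y \<longrightarrow> g x \<noteq> g y)}"
    using fin col by blast
  have le: "enat (card ((f \<circ> \<phi>) ` V)) \<le> enat (card (f ` W))" using \<open>card ((f \<circ> \<phi>) ` V) \<le> card (f ` W)\<close> by simp
  show "\<exists>a\<in>{enat (card (g ` V)) |(g :: _ \<Rightarrow> nat). finite (g ` V) \<and> (\<forall>x\<in>V. \<forall>y\<in>V. E x y \<longrightarrow> g x \<noteq> g y)}.
            a \<le> enat (card (f ` W))"
    using m le by blast
qed

theorem corollary2p5:
  fixes R1 :: "('a, 'm) ring_scheme" and R2 :: "('b, 'n) ring_scheme"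
  assumes "cring R1" and "cring R2"
    and "\<one>\<^bsub>R1\<^esub> \<noteq> \<zero>\<^bsub>R1\<^esub>" and "\<one>\<^bsub>R2\<^esub> \<noteq> \<zero>\<^bsub>R2\<^esub>"
    and "ideal I1 R1" and "ideal I2 R2"
  shows "omega_G (RDirProd R1 R2) (I1 \<times> I2) \<ge> max (omega_G R1 I1) (omega_G R2 I2)
     \<and> chi_G (RDirProd R1 R2) (I1 \<times> I2) \<ge> max (chi_G R1 I1) (chi_G R2 I2)"
proof -
  note e1 = emb1[OF assms(1,2,5,6)] and e2 = emb2[OF assms(1,2,5,6)]
  have i1: "inj_on (\<lambda>x. (x, \<zero>\<^bsub>R2\<^esub>)) V" for V by (auto simp: inj_on_def)
  have i2: "inj_on (\<lambda>x. (\<zero>\<^bsub>R1\<^esub>, x)) V" for V by (auto simp: inj_on_def)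
  show ?thesis
    using clique_mono[OF e1(1) i1 e1(2)] clique_mono[OF e2(1) i2 e2(2)]
      chrom_mono[OF e1(1) e1(2)] chrom_mono[OF e2(1) e2(2)] by simp
qed

end
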